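(* Let $\Theta\vdash^\top t$ be a $\beta$-normal $\mathsf{F_{<:}^\top}$ term-in-context and $\Theta\vdash^\top T$ an $\mathsf{F_{<:}^\top}$ type. If $\Theta\vdash t:T$ is derivable in System $\mathsf{F_{<:}^{K\top}}$, then $\Theta\vdash^\top t:T$ is derivable in System $\mathsf{F_{<:}^\top}$.
   Context: System $\mathsf{F_{<:}^{K\top}}$: raw types $T ::= \top \mid X \mid T\to T \mid \forall^{\mathsf K}(X<:T).T \mid \forall^\top(X<:T).T$, up to $\alpha$-conversion. Contexts $\Theta$: finite sequences of $X<:T$ or $x:T$ with distinct variables, each type well-formed over the preceding part. Subtyping $\Theta\vdash S<:T$: (Var) $\Theta,X<:T,\Theta'\vdash X<:T$; (Top) $T<:\top$; (Refl); (Trans); ($\to$) from $S'<:S$, $T<:T'$ infer $S\to T<:S'\to T'$; ($\forall$-Fun) from $\Theta,X<:S\vdash T<:T'$ infer $\forall^{\mathsf K}(X<:S).T<:\forall^{\mathsf K}(X<:S).T'$; ($\forall$-Loc) from $\Theta\vdash T_0<:S_0$, $\Theta,X<:S_0\vdash S_1<:T_1$ infer $\forall^{\mathsf K}(X<:S_0).S_1<:\forall^\top(X<:T_0).T_1$; ($\forall$-Top) from $\Theta\vdash T_0<:S_0$, $\Theta,X<:\top\vdash S_1<:T_1$ infer $\forall^\top(X<:S_0).S_1<:\forall^\top(X<:T_0).T_1$. Raw terms $t ::= \mathsf{top}\mid x\mid\lambda(x:T).t\mid\Lambda(X<:T).t\mid t\,t\mid t\{T\}$. Typing: $\mathsf{top}:\top$;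 $\Theta,x:T,\Theta'\vdash x:T$; (sub) from $t:T$, $T<:T'$ infer $t:T'$; ($\to$-i) from $\Theta,x:S\vdash t:T$ infer $\lambda(x:S).t:S\to T$; ($\to$-e) from $t:S\to T$, $s:S$ infer $t\,s:T$; ($\forall$-i) from $\Theta,X<:S\vdash t:T$ infer $\Theta\vdash\Lambda(X<:S).t:\forall^{\mathsf K}(X<:S).T$; ($\forall$-e) from $\Theta\vdash t:\forall^\top(X<:S).T$ and $\Theta\vdash S'<:S$ infer $\Theta\vdash t\{S'\}:T[S'/X]$. $\mathsf{F_{<:}^\top}$ types, contexts and terms are those in which only $\forall^\top$ occurs. System $\mathsf{F_{<:}^\top}$ (judgements $\vdash^\top$) has subtyping rules Var, Top, Refl, Trans, $\to$, $\forall$-Top only, and the same typing rules except that ($\forall$-i) concludes $\Theta\vdash^\top\Lambda(X<:S).t:\forall^\top(X<:S).T$. A term is $\beta$-normal if it has no subterm of the form $(\lambda(x:S).t)\,s$ or $(\Lambda(X<:S).t)\{R\}$. *)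

theory Defs
  imports Main
begin

text \<open>De Bruijn representation (in the style of the POPLmark Isabelle development):
  types and term variables share one index space, index i refers to the i-th
  binding of the context counting from the most recent one (head of the list).\<close>

datatype ty =
    TTop
  | TV nat
  | Arr ty ty
  | AllK ty ty
  | AllT ty ty

datatype tm =
    top
  | V nat
  | Lam ty tm
  | TLam ty tm
  | App tm tm
  | TApp tm ty

datatype bind = VarB ty | TVarB ty

type_synonym env = "bind list"

fun shift_ty :: "nat \<Rightarrow> nat \<Rightarrow> ty \<Rightarrow> ty" where
  "shift_ty n k TTop = TTop"
| "shift_ty n k (TV i) = (if i < k then TV i else TV (i + n))"
| "shift_ty n k (Arr S T) = Arr (shift_ty n k S) (shift_ty n k T)"
| "shift_ty n k (AllK S T) = AllK (shift_ty n k S) (shift_ty n (Suc k) T)"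
| "shift_ty n k (AllT S T) = AllT (shift_ty n k S) (shift_ty n (Suc k) T)"

fun subst_ty :: "nat \<Rightarrow> ty \<Rightarrow> ty \<Rightarrow> ty" where
  "subst_ty k S TTop = TTop"
| "subst_ty k S (TV i) =
     (if k < i then TV (i - 1) else if i = k then shift_ty k 0 S else TV i)"
| "subst_ty k S (Arr T1 T2) = Arr (subst_ty k S T1) (subst_ty k S T2)"
| "subst_ty k S (AllK T1 T2) = AllK (subst_ty k S T1) (subst_ty (Suc k) S T2)"
| "subst_ty k S (AllT T1 T2) = AllT (subst_ty k S T1) (subst_ty (Suc k) S T2)"

fun wf_ty :: "env \<Rightarrow> ty \<Rightarrow> bool" where
  "wf_ty \<Gamma> TTop = True"
| "wf_ty \<Gamma> (TV i) = (i < length \<Gamma> \<and> (\<exists>T. \<Gamma> ! i = TVarB T))"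
| "wf_ty \<Gamma> (Arr S T) = (wf_ty \<Gamma> S \<and> wf_ty \<Gamma> T)"
| "wf_ty \<Gamma> (AllK S T) = (wf_ty \<Gamma> S \<and> wf_ty (TVarB S # \<Gamma>) T)"
| "wf_ty \<Gamma> (AllT S T) = (wf_ty \<Gamma> S \<and> wf_ty (TVarB S # \<Gamma>) T)"

fun wf_env :: "env \<Rightarrow> bool" where
  "wf_env [] = True"
| "wf_env (VarB T # \<Gamma>) = (wf_ty \<Gamma> T \<and> wf_env \<Gamma>)"
| "wf_env (TVarB T # \<Gamma>) = (wf_ty \<Gamma> T \<and> wf_env \<Gamma>)"

fun wf_tm :: "env \<Rightarrow> tm \<Rightarrow> bool" where
  "wf_tm \<Gamma> top = True"
| "wf_tm \<Gamma> (V i) = (i < length \<Gamma> \<and> (\<exists>T. \<Gamma> ! i = VarB T))"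
| "wf_tm \<Gamma> (Lam S t) = (wf_ty \<Gamma> S \<and> wf_tm (VarB S # \<Gamma>) t)"
| "wf_tm \<Gamma> (TLam S t) = (wf_ty \<Gamma> S \<and> wf_tm (TVarB S # \<Gamma>) t)"
| "wf_tm \<Gamma> (App t s) = (wf_tm \<Gamma> t \<and> wf_tm \<Gamma> s)"
| "wf_tm \<Gamma> (TApp t S) = (wf_tm \<Gamma> t \<and> wf_ty \<Gamma> S)"

text \<open>The F_{<:}^Top fragment: only \<forall>^Top occurs.\<close>
fun top_ty :: "ty \<Rightarrow> bool" where
  "top_ty TTop = True"
| "top_ty (TV i) = True"
| "top_ty (Arr S T) = (top_ty S \<and> top_ty T)"
| "top_ty (AllK S T) = False"
| "top_ty (AllT S T) = (top_ty S \<and> top_ty T)"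

fun top_bind :: "bind \<Rightarrow> bool" where
  "top_bind (VarB T) = top_ty T"
| "top_bind (TVarB T) = top_ty T"

definition top_env :: "env \<Rightarrow> bool" where
  "top_env \<Gamma> = (\<forall>b \<in> set \<Gamma>. top_bind b)"

fun top_tm :: "tm \<Rightarrow> bool" where
  "top_tm top = True"
| "top_tm (V i) = True"
| "top_tm (Lam S t) = (top_ty S \<and> top_tm t)"
| "top_tm (TLam S t) = (top_ty S \<and> top_tm t)"
| "top_tm (App t s) = (top_tm t \<and> top_tm s)"
| "top_tm (TApp t S) = (top_ty S \<and> top_tm t)"

fun beta_normal :: "tm \<Rightarrow> bool" where
  "beta_normal top = True"
| "beta_normal (V i) = True"
| "beta_normal (Lam S t) = beta_normal t"
| "beta_normal (TLam S t) = beta_normal t"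
| "beta_normal (App t s) =
     ((case t of Lam _ _ \<Rightarrow> False | _ \<Rightarrow> True) \<and> beta_normal t \<and> beta_normal s)"
| "beta_normal (TApp t S) =
     ((case t of TLam _ _ \<Rightarrow> False | _ \<Rightarrow> True) \<and> beta_normal t)"

inductive subK :: "env \<Rightarrow> ty \<Rightarrow> ty \<Rightarrow> bool" where
  SK_Var: "\<lbrakk>wf_env \<Gamma>; i < length \<Gamma>; \<Gamma> ! i = TVarB T\<rbrakk>
           \<Longrightarrow> subK \<Gamma> (TV i) (shift_ty (Suc i) 0 T)"
| SK_Top: "\<lbrakk>wf_env \<Gamma>; wf_ty \<Gamma> T\<rbrakk> \<Longrightarrow> subK \<Gamma> T TTop"
| SK_Refl: "\<lbrakk>wf_env \<Gamma>; wf_ty \<Gamma> T\<rbrakk> \<Longrightarrow> subK \<Gamma> T T"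
| SK_Trans: "\<lbrakk>subK \<Gamma> S U; subK \<Gamma> U T\<rbrakk> \<Longrightarrow> subK \<Gamma> S T"
| SK_Arr: "\<lbrakk>subK \<Gamma> S' S; subK \<Gamma> T T'\<rbrakk> \<Longrightarrow> subK \<Gamma> (Arr S T) (Arr S' T')"
| SK_AllFun: "subK (TVarB S # \<Gamma>) T T' \<Longrightarrow> subK \<Gamma> (AllK S T) (AllK S T')"
| SK_AllLoc: "\<lbrakk>subK \<Gamma> T0 S0; subK (TVarB S0 # \<Gamma>) S1 T1\<rbrakk>
              \<Longrightarrow> subK \<Gamma> (AllK S0 S1) (AllT T0 T1)"
| SK_AllTop: "\<lbrakk>subK \<Gamma> T0 S0; subK (TVarB TTop # \<Gamma>) S1 T1\<rbrakk>
              \<Longrightarrow> subK \<Gamma> (AllT S0 S1) (AllT T0 T1)"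

inductive typK :: "env \<Rightarrow> tm \<Rightarrow> ty \<Rightarrow> bool" where
  TK_Top: "wf_env \<Gamma> \<Longrightarrow> typK \<Gamma> top TTop"
| TK_Var: "\<lbrakk>wf_env \<Gamma>; i < length \<Gamma>; \<Gamma> ! i = VarB T\<rbrakk>
           \<Longrightarrow> typK \<Gamma> (V i) (shift_ty (Suc i) 0 T)"
| TK_Sub: "\<lbrakk>typK \<Gamma> t T; subK \<Gamma> T T'\<rbrakk> \<Longrightarrow> typK \<Gamma> t T'"
| TK_Abs: "typK (VarB S # \<Gamma>) t (shift_ty 1 0 T) \<Longrightarrow> typK \<Gamma> (Lam S t) (Arr S T)"
| TK_App: "\<lbrakk>typK \<Gamma> t (Arr S T); typK \<Gamma> s S\<rbrakk> \<Longrightarrow> typK \<Gamma> (App t s) T"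
| TK_TAbs: "typK (TVarB S # \<Gamma>) t T \<Longrightarrow> typK \<Gamma> (TLam S t) (AllK S T)"
| TK_TApp: "\<lbrakk>typK \<Gamma> t (AllT S T); subK \<Gamma> S' S\<rbrakk>
            \<Longrightarrow> typK \<Gamma> (TApp t S') (subst_ty 0 S' T)"

inductive subT :: "env \<Rightarrow> ty \<Rightarrow> ty \<Rightarrow> bool" where
  ST_Var: "\<lbrakk>wf_env \<Gamma>; i < length \<Gamma>; \<Gamma> ! i = TVarB T\<rbrakk>
           \<Longrightarrow> subT \<Gamma> (TV i) (shift_ty (Suc i) 0 T)"
| ST_Top: "\<lbrakk>wf_env \<Gamma>; wf_ty \<Gamma> T\<rbrakk> \<Longrightarrow> subT \<Gamma> T TTop"
| ST_Refl: "\<lbrakk>wf_env \<Gamma>; wf_ty \<Gamma> T\<rbrakk> \<Longrightarrow> subT \<Gamma> T T"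
| ST_Trans: "\<lbrakk>subT \<Gamma> S U; subT \<Gamma> U T\<rbrakk> \<Longrightarrow> subT \<Gamma> S T"
| ST_Arr: "\<lbrakk>subT \<Gamma> S' S; subT \<Gamma> T T'\<rbrakk> \<Longrightarrow> subT \<Gamma> (Arr S T) (Arr S' T')"
| ST_AllTop: "\<lbrakk>subT \<Gamma> T0 S0; subT (TVarB TTop # \<Gamma>) S1 T1\<rbrakk>
              \<Longrightarrow> subT \<Gamma> (AllT S0 S1) (AllT T0 T1)"

inductive typT :: "env \<Rightarrow> tm \<Rightarrow> ty \<Rightarrow> bool" where
  TT_Top: "wf_env \<Gamma> \<Longrightarrow> typT \<Gamma> top TTop"
| TT_Var: "\<lbrakk>wf_env \<Gamma>; i < length \<Gamma>; \<Gamma> ! i = VarB T\<rbrakk>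
           \<Longrightarrow> typT \<Gamma> (V i) (shift_ty (Suc i) 0 T)"
| TT_Sub: "\<lbrakk>typT \<Gamma> t T; subT \<Gamma> T T'\<rbrakk> \<Longrightarrow> typT \<Gamma> t T'"
| TT_Abs: "typT (VarB S # \<Gamma>) t (shift_ty 1 0 T) \<Longrightarrow> typT \<Gamma> (Lam S t) (Arr S T)"
| TT_App: "\<lbrakk>typT \<Gamma> t (Arr S T); typT \<Gamma> s S\<rbrakk> \<Longrightarrow> typT \<Gamma> (App t s) T"
| TT_TAbs: "typT (TVarB S # \<Gamma>) t T \<Longrightarrow> typT \<Gamma> (TLam S t) (AllT S T)"
| TT_TApp: "\<lbrakk>typT \<Gamma> t (AllT S T); subT \<Gamma> S' S\<rbrakk>
            \<Longrightarrow> typT \<Gamma> (TApp t S') (subst_ty 0 S' T)"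

end

theory Submission
  imports Defs
begin


lemma shift_shift_comp: "c \<le> d \<Longrightarrow> d \<le> c + j \<Longrightarrow> shift_ty n d (shift_ty j c T) = shift_ty (n + j) c T"
  by (induction T arbitrary: c d) auto

lemma shift_comm: "c \<le> d \<Longrightarrow> shift_ty m (d + n) (shift_ty n c U) = shift_ty n c (shift_ty m d U)"
  by (induction U arbitrary: c d) (auto, (metis add_Suc Suc_le_mono)+)

lemma subst_shift1: "d \<le> j \<Longrightarrow> subst_ty (j + n) S (shift_ty n d U) = shift_ty n d (subst_ty j S U)"
  by (induction U arbitrary: d j) (auto simp: shift_shift_comp add.commute, (metis add_Suc Suc_le_mono)+)

lemma subst_shift2: "d \<le> k \<Longrightarrow> k < d + n \<Longrightarrow> subst_ty k S (shift_ty n d U) = shift_ty (n - 1) d U"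
  by (induction U arbitrary: d k) auto

lemma top_shift[simp]: "top_ty (shift_ty n k T) = top_ty T"
  by (induction T arbitrary: k) auto

lemma top_subst: "top_ty S \<Longrightarrow> top_ty T \<Longrightarrow> top_ty (subst_ty k S T)"
  by (induction T arbitrary: k) auto

fun is_tv :: "bind \<Rightarrow> bool" where
  "is_tv (TVarB _) = True" | "is_tv (VarB _) = False"

lemma is_tv_ex: "(\<exists>T. b = TVarB T) = is_tv b"
  by (cases b) auto

lemma wf_tvs: "map is_tv \<Gamma> = map is_tv \<Gamma>' \<Longrightarrow> wf_ty \<Gamma> T = wf_ty \<Gamma>' T"
proof (induction T arbitrary: \<Gamma> \<Gamma>')
  case (TV i)
  then have "length \<Gamma> = length \<Gamma>'" by (metis length_map)
  moreover have "i < length \<Gamma> \<Longrightarrow> is_tv (\<Gamma>!i) = is_tv (\<Gamma>'!i)"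
    using TV calculation by (metis nth_map)
  ultimately show ?case by (auto simp: is_tv_ex)
next
  case (Arr A B)
  show ?case using Arr.IH(1)[OF Arr.prems] Arr.IH(2)[OF Arr.prems] by simp
next
  case (AllK A B)
  have "map is_tv (TVarB A # \<Gamma>) = map is_tv (TVarB A # \<Gamma>')" using AllK.prems by simp
  then show ?case using AllK.IH(1)[OF AllK.prems] AllK.IH(2)[of "TVarB A # \<Gamma>" "TVarB A # \<Gamma>'"] by simp
next
  case (AllT A B)
  have "map is_tv (TVarB A # \<Gamma>) = map is_tv (TVarB A # \<Gamma>')" using AllT.prems by simp
  then show ?case using AllT.IH(1)[OF AllT.prems] AllT.IH(2)[of "TVarB A # \<Gamma>" "TVarB A # \<Gamma>'"] by simp
qed simp

lemma wf_tv_cons: "wf_ty (TVarB A # \<Gamma>) T \<Longrightarrow> wf_ty (TVarB B # \<Gamma>) T"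
  by (rule wf_tvs[THEN iffD1, rotated]) auto

lemma wf_shift: "wf_ty (\<Delta>@\<Gamma>) T \<Longrightarrow> wf_ty (\<Delta>@\<Theta>@\<Gamma>) (shift_ty (length \<Theta>) (length \<Delta>) T)"
proof (induction T arbitrary: \<Delta>)
  case (TV i)
  then show ?case by (auto simp: nth_append)
next
  case (AllK T1 T2)
  have "wf_ty (TVarB T1 # \<Delta> @ \<Theta> @ \<Gamma>) (shift_ty (length \<Theta>) (Suc (length \<Delta>)) T2)"
    using AllK.IH(2)[of "TVarB T1 # \<Delta>"] AllK.prems by simp
  then have "wf_ty (TVarB (shift_ty (length \<Theta>) (length \<Delta>) T1) # \<Delta> @ \<Theta> @ \<Gamma>) (shift_ty (length \<Theta>) (Suc (length \<Delta>)) T2)"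
    by (rule wf_tv_cons)
  then show ?case using AllK.IH(1) AllK.prems by simp
next
  case (AllT T1 T2)
  have "wf_ty (TVarB T1 # \<Delta> @ \<Theta> @ \<Gamma>) (shift_ty (length \<Theta>) (Suc (length \<Delta>)) T2)"
    using AllT.IH(2)[of "TVarB T1 # \<Delta>"] AllT.prems by simp
  then have "wf_ty (TVarB (shift_ty (length \<Theta>) (length \<Delta>) T1) # \<Delta> @ \<Theta> @ \<Gamma>) (shift_ty (length \<Theta>) (Suc (length \<Delta>)) T2)"
    by (rule wf_tv_cons)
  then show ?case using AllT.IH(1) AllT.prems by simp
qed auto

lemma wf_shift0: "wf_ty \<Gamma> T \<Longrightarrow> wf_ty (\<Theta>@\<Gamma>) (shift_ty (length \<Theta>) 0 T)"
  using wf_shift[of "[]"] by simp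

lemma wf_subst: "wf_ty (\<Delta>@TVarB B#\<Gamma>) T \<Longrightarrow> wf_ty \<Gamma> S \<Longrightarrow> map is_tv \<Delta>' = map is_tv \<Delta>
  \<Longrightarrow> wf_ty (\<Delta>'@\<Gamma>) (subst_ty (length \<Delta>) S T)"
proof (induction T arbitrary: \<Delta> \<Delta>')
  case (TV i)
  have len: "length \<Delta>' = length \<Delta>" using TV(3) by (metis length_map)
  consider "i < length \<Delta>" | "i = length \<Delta>" | "i > length \<Delta>" by linarith
  then show ?case
  proof cases
    case 1
    then have "is_tv (\<Delta>'!i) = is_tv (\<Delta>!i)" using TV(3) len by (metis nth_map)
    then show ?thesis using 1 TV(1) len by (auto simp: nth_append is_tv_ex)
  next
    case 2
    then show ?thesis using wf_shift0[OF TV(2), of \<Delta>'] len by simp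
  next
    case 3
    then show ?thesis using TV(1) len by (auto simp: nth_append)
  qed
next
  case (AllK T1 T2)
  have "wf_ty (TVarB (subst_ty (length \<Delta>) S T1) # \<Delta>' @ \<Gamma>) (subst_ty (length (TVarB T1 # \<Delta>)) S T2)"
    using AllK.IH(2)[of "TVarB T1 # \<Delta>" "TVarB (subst_ty (length \<Delta>) S T1) # \<Delta>'"] AllK.prems by simp
  then show ?case using AllK.IH(1) AllK.prems by simp
next
  case (AllT T1 T2)
  have "wf_ty (TVarB (subst_ty (length \<Delta>) S T1) # \<Delta>' @ \<Gamma>) (subst_ty (length (TVarB T1 # \<Delta>)) S T2)"
    using AllT.IH(2)[of "TVarB T1 # \<Delta>" "TVarB (subst_ty (length \<Delta>) S T1) # \<Delta>'"] AllT.prems by simp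
  then show ?case using AllT.IH(1) AllT.prems by simp
next
  case (Arr T1 T2)
  have h: "wf_ty (\<Delta>@TVarB B#\<Gamma>) T1" "wf_ty (\<Delta>@TVarB B#\<Gamma>) T2" using Arr.prems(1) by auto
  show ?case using Arr.IH(1)[OF h(1) Arr.prems(2,3)] Arr.IH(2)[OF h(2) Arr.prems(2,3)] by simp
qed simp

lemma wf_env_nth: "wf_env \<Gamma> \<Longrightarrow> i < length \<Gamma> \<Longrightarrow> \<Gamma>!i = TVarB U \<or> \<Gamma>!i = VarB U \<Longrightarrow> wf_ty (drop (Suc i) \<Gamma>) U"
proof (induction \<Gamma> arbitrary: i)
  case (Cons b \<Gamma>)
  show ?case
  proof (cases i)
    case 0
    then show ?thesis using Cons by (cases b) auto
  next
    case (Suc j)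
    have "wf_env \<Gamma>" using Cons(2) by (cases b) auto
    then show ?thesis using Cons Suc by auto
  qed
qed simp

lemma wf_env_tv: "wf_env \<Gamma> \<Longrightarrow> i < length \<Gamma> \<Longrightarrow> \<Gamma>!i = TVarB U \<Longrightarrow> wf_ty \<Gamma> (shift_ty (Suc i) 0 U)"
proof -
  assume a: "wf_env \<Gamma>" "i < length \<Gamma>" "\<Gamma>!i = TVarB U"
  have "wf_ty (drop (Suc i) \<Gamma>) U" using wf_env_nth a by blast
  from wf_shift0[OF this, of "take (Suc i) \<Gamma>"] show ?thesis using a(2) by simp
qed

lemma wf_env_v: "wf_env \<Gamma> \<Longrightarrow> i < length \<Gamma> \<Longrightarrow> \<Gamma>!i = VarB U \<Longrightarrow> wf_ty \<Gamma> (shift_ty (Suc i) 0 U)"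
proof -
  assume a: "wf_env \<Gamma>" "i < length \<Gamma>" "\<Gamma>!i = VarB U"
  have "wf_ty (drop (Suc i) \<Gamma>) U" using wf_env_nth a by blast
  from wf_shift0[OF this, of "take (Suc i) \<Gamma>"] show ?thesis using a(2) by simp
qed

lemma top_env_nth: "top_env \<Gamma> \<Longrightarrow> i < length \<Gamma> \<Longrightarrow> \<Gamma>!i = TVarB U \<or> \<Gamma>!i = VarB U \<Longrightarrow> top_ty U"
  unfolding top_env_def by (metis nth_mem top_bind.simps)



inductive algK :: "env \<Rightarrow> ty \<Rightarrow> ty \<Rightarrow> bool" where
  A_Top: "algK \<Gamma> S TTop"
| A_Refl: "algK \<Gamma> (TV i) (TV i)"
| A_TVar: "\<lbrakk>i < length \<Gamma>; \<Gamma> ! i = TVarB U; algK \<Gamma> (shift_ty (Suc i) 0 U) T\<rbrakk> \<Longrightarrow> algK \<Gamma> (TV i) T"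
| A_Arr: "\<lbrakk>algK \<Gamma> S' S; algK \<Gamma> T T'\<rbrakk> \<Longrightarrow> algK \<Gamma> (Arr S T) (Arr S' T')"
| A_AllFun: "algK (TVarB S # \<Gamma>) T T' \<Longrightarrow> algK \<Gamma> (AllK S T) (AllK S T')"
| A_AllLoc: "\<lbrakk>algK \<Gamma> T0 S0; algK (TVarB S0 # \<Gamma>) S1 T1\<rbrakk> \<Longrightarrow> algK \<Gamma> (AllK S0 S1) (AllT T0 T1)"
| A_AllTop: "\<lbrakk>algK \<Gamma> T0 S0; algK (TVarB TTop # \<Gamma>) S1 T1\<rbrakk> \<Longrightarrow> algK \<Gamma> (AllT S0 S1) (AllT T0 T1)"

lemma alg_refl: "algK \<Gamma> T T"
  by (induction T arbitrary: \<Gamma>) (auto intro: algK.intros)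

lemma alg_top_inv: "algK \<Gamma> TTop T \<Longrightarrow> T = TTop"
  by (cases rule: algK.cases) auto

lemma alg_Arr_inv: "algK \<Gamma> (Arr Q1 Q2) T \<Longrightarrow> T = TTop \<or> (\<exists>T1 T2. T = Arr T1 T2 \<and> algK \<Gamma> T1 Q1 \<and> algK \<Gamma> Q2 T2)"
  by (cases rule: algK.cases) auto

lemma alg_AllK_inv: "algK \<Gamma> (AllK Q0 Q1) T \<Longrightarrow> T = TTop \<or> (\<exists>T1. T = AllK Q0 T1 \<and> algK (TVarB Q0#\<Gamma>) Q1 T1)
   \<or> (\<exists>T0 T1. T = AllT T0 T1 \<and> algK \<Gamma> T0 Q0 \<and> algK (TVarB Q0#\<Gamma>) Q1 T1)"
  by (cases rule: algK.cases) auto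

lemma alg_AllT_inv: "algK \<Gamma> (AllT Q0 Q1) T \<Longrightarrow> T = TTop \<or> (\<exists>T0 T1. T = AllT T0 T1 \<and> algK \<Gamma> T0 Q0 \<and> algK (TVarB TTop#\<Gamma>) Q1 T1)"
  by (cases rule: algK.cases) auto

lemma alg_narrow: "algK \<Gamma>' A B \<Longrightarrow> \<Gamma>' = \<Delta> @ TVarB TTop # \<Gamma> \<Longrightarrow> algK (\<Delta> @ TVarB X # \<Gamma>) A B"
proof (induction arbitrary: \<Delta> rule: algK.induct)
  case (A_TVar i \<Gamma>' U T)
  show ?case
  proof (cases "i = length \<Delta>")
    case True
    then have "U = TTop" using A_TVar by (simp add: nth_append)
    then have "T = TTop" using A_TVar(3) alg_top_inv by simp
    then show ?thesis by (simp add: algK.A_Top)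
  next
    case False
    then have "(\<Delta> @ TVarB X # \<Gamma>) ! i = TVarB U" using A_TVar
      by (auto simp: nth_append split: if_splits)
    moreover have "i < length (\<Delta> @ TVarB X # \<Gamma>)" using A_TVar by simp
    ultimately show ?thesis using A_TVar by (auto intro: algK.A_TVar)
  qed
next
  case (A_AllFun S \<Gamma>' T T')
  then show ?case using A_AllFun.IH[of "TVarB S # \<Delta>"] by (auto intro: algK.intros)
next
  case (A_AllLoc \<Gamma>' T0 S0 S1 T1)
  then show ?case using A_AllLoc.IH(2)[of "TVarB S0 # \<Delta>"] by (auto intro: algK.intros)
next
  case (A_AllTop \<Gamma>' T0 S0 S1 T1)
  then show ?case using A_AllTop.IH(2)[of "TVarB TTop # \<Delta>"] by (auto intro: algK.intros)
qed (auto intro: algK.intros)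

lemma alg_trans: "algK \<Gamma> S Q \<Longrightarrow> algK \<Gamma> Q T \<Longrightarrow> algK \<Gamma> S T"
proof (induction Q arbitrary: \<Gamma> S T rule: measure_induct_rule[of size])
  case (less Q)
  have "algK \<Gamma> S Q' \<Longrightarrow> Q' = Q \<Longrightarrow> algK \<Gamma> Q' T \<Longrightarrow> algK \<Gamma> S T" for \<Gamma> S Q' T
  proof (induction arbitrary: T rule: algK.induct)
    case (A_Top \<Gamma> S)
    then show ?case using alg_top_inv by (auto intro: algK.intros)
  next
    case (A_Refl \<Gamma> i)
    then show ?case by simp
  next
    case (A_TVar i \<Gamma> U Q')
    then show ?case by (auto intro: algK.intros)
  next
    case (A_Arr \<Gamma> Q1 S1 S2 Q2)
    from alg_Arr_inv[OF A_Arr.prems(2)] show ?case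
    proof
      assume "T = TTop" then show ?thesis by (simp add: algK.A_Top)
    next
      assume "\<exists>T1 T2. T = Arr T1 T2 \<and> algK \<Gamma> T1 Q1 \<and> algK \<Gamma> Q2 T2"
      then obtain T1 T2 where t: "T = Arr T1 T2" "algK \<Gamma> T1 Q1" "algK \<Gamma> Q2 T2" by blast
      have "algK \<Gamma> T1 S1" using less.IH[of Q1] t A_Arr by auto
      moreover have "algK \<Gamma> S2 T2" using less.IH[of Q2] t A_Arr by auto
      ultimately show ?thesis using t by (simp add: algK.A_Arr)
    qed
  next
    case (A_AllFun S0 \<Gamma> S1 Q1)
    from alg_AllK_inv[OF A_AllFun.prems(2)] show ?case
    proof (elim disjE exE conjE)
      assume "T = TTop" then show ?thesis by (simp add: algK.A_Top)
    next
      fix T1 assume t: "T = AllK S0 T1" "algK (TVarB S0 # \<Gamma>) Q1 T1"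
      have "algK (TVarB S0 # \<Gamma>) S1 T1" using less.IH[of Q1] t A_AllFun by auto
      then show ?thesis using t by (simp add: algK.A_AllFun)
    next
      fix T0 T1 assume t: "T = AllT T0 T1" "algK \<Gamma> T0 S0" "algK (TVarB S0 # \<Gamma>) Q1 T1"
      have "algK (TVarB S0 # \<Gamma>) S1 T1" using less.IH[of Q1] t A_AllFun by auto
      then show ?thesis using t by (simp add: algK.A_AllLoc)
    qed
  next
    case (A_AllLoc \<Gamma> Q0 S0 S1 Q1)
    from alg_AllT_inv[OF A_AllLoc.prems(2)] show ?case
    proof (elim disjE exE conjE)
      assume "T = TTop" then show ?thesis by (simp add: algK.A_Top)
    next
      fix T0 T1 assume t: "T = AllT T0 T1" "algK \<Gamma> T0 Q0" "algK (TVarB TTop # \<Gamma>) Q1 T1"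
      have n: "algK (TVarB S0 # \<Gamma>) Q1 T1" using alg_narrow[OF t(3), of "[]"] by simp
      have "algK (TVarB S0 # \<Gamma>) S1 T1" using less.IH[of Q1] n A_AllLoc by auto
      moreover have "algK \<Gamma> T0 S0" using less.IH[of Q0] t A_AllLoc by auto
      ultimately show ?thesis using t by (simp add: algK.A_AllLoc)
    qed
  next
    case (A_AllTop \<Gamma> Q0 S0 S1 Q1)
    from alg_AllT_inv[OF A_AllTop.prems(2)] show ?case
    proof (elim disjE exE conjE)
      assume "T = TTop" then show ?thesis by (simp add: algK.A_Top)
    next
      fix T0 T1 assume t: "T = AllT T0 T1" "algK \<Gamma> T0 Q0" "algK (TVarB TTop # \<Gamma>) Q1 T1"
      have "algK (TVarB TTop # \<Gamma>) S1 T1" using less.IH[of Q1] t A_AllTop by auto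
      moreover have "algK \<Gamma> T0 S0" using less.IH[of Q0] t A_AllTop by auto
      ultimately show ?thesis using t by (simp add: algK.A_AllTop)
    qed
  qed
  then show ?case using less.prems by blast
qed



fun shift_bind :: "nat \<Rightarrow> nat \<Rightarrow> bind \<Rightarrow> bind" where
  "shift_bind n k (VarB T) = VarB (shift_ty n k T)"
| "shift_bind n k (TVarB T) = TVarB (shift_ty n k T)"

fun shift_env :: "nat \<Rightarrow> env \<Rightarrow> env" where
  "shift_env n [] = []"
| "shift_env n (B # \<Delta>) = shift_bind n (length \<Delta>) B # shift_env n \<Delta>"

fun subst_bind :: "nat \<Rightarrow> ty \<Rightarrow> bind \<Rightarrow> bind" where
  "subst_bind k S (VarB T) = VarB (subst_ty k S T)"
| "subst_bind k S (TVarB T) = TVarB (subst_ty k S T)"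

fun subst_env :: "ty \<Rightarrow> env \<Rightarrow> env" where
  "subst_env S [] = []"
| "subst_env S (B # \<Delta>) = subst_bind (length \<Delta>) S B # subst_env S \<Delta>"

lemma length_shift_env[simp]: "length (shift_env n \<Delta>) = length \<Delta>"
  by (induction \<Delta>) auto

lemma length_subst_env[simp]: "length (subst_env S \<Delta>) = length \<Delta>"
  by (induction \<Delta>) auto

lemma shift_env_nth: "i < length \<Delta> \<Longrightarrow> shift_env n \<Delta> ! i = shift_bind n (length \<Delta> - Suc i) (\<Delta> ! i)"
  by (induction \<Delta> arbitrary: i) (auto simp: nth_Cons split: nat.splits)

lemma subst_env_nth: "i < length \<Delta> \<Longrightarrow> subst_env S \<Delta> ! i = subst_bind (length \<Delta> - Suc i) S (\<Delta> ! i)"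
  by (induction \<Delta> arbitrary: i) (auto simp: nth_Cons split: nat.splits)

lemma alg_weaken: "algK \<Gamma>' A B \<Longrightarrow> \<Gamma>' = \<Delta> @ \<Gamma> \<Longrightarrow>
  algK (shift_env 1 \<Delta> @ X # \<Gamma>) (shift_ty 1 (length \<Delta>) A) (shift_ty 1 (length \<Delta>) B)"
proof (induction arbitrary: \<Delta> rule: algK.induct)
  case (A_TVar i \<Gamma>' U T)
  show ?case
  proof (cases "i < length \<Delta>")
    case True
    have e: "(shift_env 1 \<Delta> @ X # \<Gamma>) ! i = TVarB (shift_ty 1 (length \<Delta> - Suc i) U)"
      using True A_TVar by (simp add: nth_append shift_env_nth)
    have "shift_ty 1 (length \<Delta>) (shift_ty (Suc i) 0 U) = shift_ty (Suc i) 0 (shift_ty 1 (length \<Delta> - Suc i) U)"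
    proof -
      have eq: "length \<Delta> = (length \<Delta> - Suc i) + Suc i" using True by simp
      show ?thesis using shift_comm[where c=0 and d="length \<Delta> - Suc i" and m=1 and n="Suc i" and U=U, OF le0] by (simp only: eq[symmetric])
    qed
    then show ?thesis using A_TVar e True by (auto intro!: algK.A_TVar)
  next
    case False
    have e: "(shift_env 1 \<Delta> @ X # \<Gamma>) ! Suc i = TVarB U"
      using False A_TVar by (simp add: nth_append Suc_diff_le)
    have "shift_ty 1 (length \<Delta>) (shift_ty (Suc i) 0 U) = shift_ty (Suc (Suc i)) 0 U"
      using shift_shift_comp[of 0 "length \<Delta>" "Suc i" 1 U] False by simp
    then show ?thesis using A_TVar e False by (auto intro!: algK.A_TVar)
  qed
next
  case (A_Refl \<Gamma>' i)
  then show ?case by (simp add: alg_refl)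
next
  case (A_AllFun S \<Gamma>' T T')
  then show ?case using A_AllFun.IH[of "TVarB S # \<Delta>"] by (auto intro: algK.intros)
next
  case (A_AllLoc \<Gamma>' T0 S0 S1 T1)
  then show ?case using A_AllLoc.IH(2)[of "TVarB S0 # \<Delta>"] by (auto intro: algK.intros)
next
  case (A_AllTop \<Gamma>' T0 S0 S1 T1)
  then show ?case using A_AllTop.IH(2)[of "TVarB TTop # \<Delta>"] by (auto intro: algK.intros)
qed (auto intro: algK.intros)

lemma alg_subst: "algK \<Gamma>' A B \<Longrightarrow> \<Gamma>' = \<Delta> @ TVarB TTop # \<Gamma> \<Longrightarrow>
  algK (subst_env S \<Delta> @ \<Gamma>) (subst_ty (length \<Delta>) S A) (subst_ty (length \<Delta>) S B)"
proof (induction arbitrary: \<Delta> rule: algK.induct)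
  case (A_TVar i \<Gamma>' U T)
  consider "i < length \<Delta>" | "i = length \<Delta>" | "i > length \<Delta>" by linarith
  then show ?case
  proof cases
    case 1
    have e: "(subst_env S \<Delta> @ \<Gamma>) ! i = TVarB (subst_ty (length \<Delta> - Suc i) S U)"
      using 1 A_TVar by (simp add: nth_append subst_env_nth)
    have "subst_ty (length \<Delta>) S (shift_ty (Suc i) 0 U) = shift_ty (Suc i) 0 (subst_ty (length \<Delta> - Suc i) S U)"
    proof -
      have eq: "length \<Delta> = (length \<Delta> - Suc i) + Suc i" using 1 by simp
      show ?thesis using subst_shift1[OF le0, of "length \<Delta> - Suc i" "Suc i" S U] by (simp only: eq[symmetric])
    qed
    then show ?thesis using A_TVar e 1 by (auto intro!: algK.A_TVar)
  next
    case 2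
    then have "U = TTop" using A_TVar by (simp add: nth_append)
    then have "T = TTop" using A_TVar(3) alg_top_inv by simp
    then show ?thesis by (simp add: algK.A_Top)
  next
    case 3
    have "(TVarB TTop # \<Gamma>) ! (i - length \<Delta>) = TVarB U" using A_TVar 3 by (simp add: nth_append)
    then have g: "\<Gamma> ! (i - Suc (length \<Delta>)) = TVarB U" using 3 by (simp add: nth_Cons')
    have e: "(subst_env S \<Delta> @ \<Gamma>) ! (i - 1) = TVarB U"
    proof -
      have "\<not> i - 1 < length \<Delta>" "i - 1 - length \<Delta> = i - Suc (length \<Delta>)" using 3 by auto
      then show ?thesis using g by (simp add: nth_append del: One_nat_def)
    qed
    have "subst_ty (length \<Delta>) S (shift_ty (Suc i) 0 U) = shift_ty (Suc (i - 1)) 0 U"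
      using subst_shift2[of 0 "length \<Delta>" "Suc i" S U] 3 by simp
    moreover have "i - 1 < length (subst_env S \<Delta> @ \<Gamma>)" using 3 A_TVar by simp
    ultimately show ?thesis using A_TVar e 3 by (auto intro!: algK.A_TVar)
  qed
next
  case (A_Refl \<Gamma>' i)
  then show ?case by (simp add: alg_refl)
next
  case (A_AllFun S0 \<Gamma>' T T')
  then show ?case using A_AllFun.IH[of "TVarB S0 # \<Delta>"] by (auto intro: algK.intros)
next
  case (A_AllLoc \<Gamma>' T0 S0 S1 T1)
  then show ?case using A_AllLoc.IH(2)[of "TVarB S0 # \<Delta>"] by (auto intro: algK.intros)
next
  case (A_AllTop \<Gamma>' T0 S0 S1 T1)
  then show ?case using A_AllTop.IH(2)[of "TVarB TTop # \<Delta>"] by (auto intro: algK.intros)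
qed (auto intro: algK.intros)

lemma sub_alg: "subK \<Gamma> S T \<Longrightarrow> algK \<Gamma> S T"
proof (induction rule: subK.induct)
  case (SK_Var \<Gamma> i T)
  then show ?case by (auto intro: algK.A_TVar alg_refl)
next
  case (SK_Trans \<Gamma> S U T)
  then show ?case using alg_trans by blast
qed (auto intro: algK.intros alg_refl)

lemma alg_subT: "algK \<Gamma> S T \<Longrightarrow> wf_env \<Gamma> \<Longrightarrow> top_env \<Gamma> \<Longrightarrow> wf_ty \<Gamma> S \<Longrightarrow> wf_ty \<Gamma> T
  \<Longrightarrow> top_ty S \<Longrightarrow> top_ty T \<Longrightarrow> subT \<Gamma> S T"
proof (induction rule: algK.induct)
  case (A_Top \<Gamma> S)
  then show ?case by (simp add: subT.ST_Top)
next
  case (A_Refl \<Gamma> i)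
  then show ?case by (simp add: subT.ST_Refl)
next
  case (A_TVar i \<Gamma> U T)
  have "wf_ty \<Gamma> (shift_ty (Suc i) 0 U)" using wf_env_tv A_TVar by blast
  moreover have "top_ty U" using top_env_nth A_TVar by blast
  ultimately have "subT \<Gamma> (shift_ty (Suc i) 0 U) T" using A_TVar by simp
  then show ?case using subT.ST_Var[of \<Gamma> i U] A_TVar subT.ST_Trans by blast
next
  case (A_Arr \<Gamma> S' S T T')
  then show ?case by (simp add: subT.ST_Arr)
next
  case (A_AllTop \<Gamma> T0 S0 S1 T1)
  have "top_env (TVarB TTop # \<Gamma>)" using A_AllTop.prems by (simp add: top_env_def)
  moreover have "wf_ty (TVarB TTop # \<Gamma>) S1" "wf_ty (TVarB TTop # \<Gamma>) T1"
    using A_AllTop.prems by (auto intro: wf_tv_cons)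
  ultimately have "subT (TVarB TTop # \<Gamma>) S1 T1" using A_AllTop by simp
  then show ?case using A_AllTop by (simp add: subT.ST_AllTop)
qed auto



lemma typK_top_inv: "typK \<Gamma> u A \<Longrightarrow> u = top \<Longrightarrow> algK \<Gamma> TTop A"
proof (induction rule: typK.induct)
  case (TK_Sub \<Gamma> t T T')
  then show ?case using alg_trans sub_alg by blast
qed (auto intro: alg_refl)

lemma typK_Var_inv: "typK \<Gamma> u A \<Longrightarrow> u = V i \<Longrightarrow>
  \<exists>U. i < length \<Gamma> \<and> \<Gamma>!i = VarB U \<and> algK \<Gamma> (shift_ty (Suc i) 0 U) A"
proof (induction rule: typK.induct)
  case (TK_Sub \<Gamma> t T T')
  then show ?case using alg_trans sub_alg by blast
qed (auto intro: alg_refl)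

lemma typK_Lam_inv: "typK \<Gamma> u A \<Longrightarrow> u = Lam S t \<Longrightarrow>
  \<exists>B. typK (VarB S#\<Gamma>) t (shift_ty 1 0 B) \<and> algK \<Gamma> (Arr S B) A"
proof (induction rule: typK.induct)
  case (TK_Sub \<Gamma> t T T')
  then show ?case using alg_trans sub_alg by blast
qed (auto intro: alg_refl)

lemma typK_TLam_inv: "typK \<Gamma> u A \<Longrightarrow> u = TLam S t \<Longrightarrow>
  \<exists>B. typK (TVarB S#\<Gamma>) t B \<and> algK \<Gamma> (AllK S B) A"
proof (induction rule: typK.induct)
  case (TK_Sub \<Gamma> t T T')
  then show ?case using alg_trans sub_alg by blast
qed (auto intro: alg_refl)

lemma typK_App_inv: "typK \<Gamma> u A \<Longrightarrow> u = App t s \<Longrightarrow>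
  \<exists>A1 B1. typK \<Gamma> t (Arr A1 B1) \<and> typK \<Gamma> s A1 \<and> algK \<Gamma> B1 A"
proof (induction rule: typK.induct)
  case (TK_Sub \<Gamma> t T T')
  then show ?case using alg_trans sub_alg by blast
qed (auto intro: alg_refl)

lemma typK_TApp_inv: "typK \<Gamma> u A \<Longrightarrow> u = TApp t S' \<Longrightarrow>
  \<exists>S0 T0. typK \<Gamma> t (AllT S0 T0) \<and> subK \<Gamma> S' S0 \<and> algK \<Gamma> (subst_ty 0 S' T0) A"
proof (induction rule: typK.induct)
  case (TK_Sub \<Gamma> t T T')
  then show ?case using alg_trans sub_alg by blast
qed (auto intro: alg_refl)

lemma expose_Arr: "algK \<Gamma> M R \<Longrightarrow> R = Arr A1 B1 \<Longrightarrow> wf_env \<Gamma> \<Longrightarrow> top_env \<Gamma> \<Longrightarrow> wf_ty \<Gamma> M \<Longrightarrow> top_ty M \<Longrightarrow>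
  \<exists>A' B'. subT \<Gamma> M (Arr A' B') \<and> top_ty A' \<and> top_ty B' \<and> wf_ty \<Gamma> A' \<and> wf_ty \<Gamma> B'
     \<and> algK \<Gamma> A1 A' \<and> algK \<Gamma> B' B1"
proof (induction rule: algK.induct)
  case (A_TVar i \<Gamma> U T)
  have "wf_ty \<Gamma> (shift_ty (Suc i) 0 U)" using wf_env_tv A_TVar by blast
  moreover have "top_ty U" using top_env_nth A_TVar by blast
  ultimately obtain A' B' where h: "subT \<Gamma> (shift_ty (Suc i) 0 U) (Arr A' B') \<and> top_ty A' \<and> top_ty B' \<and> wf_ty \<Gamma> A' \<and> wf_ty \<Gamma> B'
     \<and> algK \<Gamma> A1 A' \<and> algK \<Gamma> B' B1" using A_TVar by auto
  then have "subT \<Gamma> (TV i) (Arr A' B')" using subT.ST_Var[of \<Gamma> i U] A_TVar subT.ST_Trans by blast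
  then show ?case using h by blast
next
  case (A_Arr \<Gamma> S' S T T')
  then have "subT \<Gamma> (Arr S T) (Arr S T)" by (simp add: subT.ST_Refl)
  then show ?case using A_Arr by auto
qed auto

lemma expose_All: "algK \<Gamma> M R \<Longrightarrow> R = AllT S0 T0 \<Longrightarrow> wf_env \<Gamma> \<Longrightarrow> top_env \<Gamma> \<Longrightarrow> wf_ty \<Gamma> M \<Longrightarrow> top_ty M \<Longrightarrow>
  \<exists>U0 U1. subT \<Gamma> M (AllT U0 U1) \<and> top_ty U0 \<and> top_ty U1 \<and> wf_ty \<Gamma> U0 \<and> wf_ty (TVarB U0#\<Gamma>) U1
     \<and> algK \<Gamma> S0 U0 \<and> algK (TVarB TTop#\<Gamma>) U1 T0"
proof (induction rule: algK.induct)
  case (A_TVar i \<Gamma> U T)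
  have "wf_ty \<Gamma> (shift_ty (Suc i) 0 U)" using wf_env_tv A_TVar by blast
  moreover have "top_ty U" using top_env_nth A_TVar by blast
  ultimately obtain U0 U1 where h: "subT \<Gamma> (shift_ty (Suc i) 0 U) (AllT U0 U1) \<and> top_ty U0 \<and> top_ty U1 \<and> wf_ty \<Gamma> U0 \<and> wf_ty (TVarB U0#\<Gamma>) U1
     \<and> algK \<Gamma> S0 U0 \<and> algK (TVarB TTop#\<Gamma>) U1 T0" using A_TVar by auto
  then have "subT \<Gamma> (TV i) (AllT U0 U1)" using subT.ST_Var[of \<Gamma> i U] A_TVar subT.ST_Trans by blast
  then show ?case using h by blast
next
  case (A_AllTop \<Gamma> T0' S0' S1 T1)
  then have "subT \<Gamma> (AllT S0' S1) (AllT S0' S1)" by (simp add: subT.ST_Refl)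
  then show ?case using A_AllTop by auto
qed auto



fun neutral :: "tm \<Rightarrow> bool" where
  "neutral (V _) = True" | "neutral (App _ _) = True" | "neutral (TApp _ _) = True" | "neutral _ = False"

lemma from_neutral:
  assumes "top_ty M" "wf_ty \<Gamma> M" "typT \<Gamma> t M" "algK \<Gamma> M A" "algK \<Gamma> A T" "top_ty T" "wf_ty \<Gamma> T"
    "wf_env \<Gamma>" "top_env \<Gamma>"
  shows "typT \<Gamma> t T"
proof -
  have "algK \<Gamma> M T" using assms alg_trans by blast
  then have "subT \<Gamma> M T" using alg_subT assms by blast
  then show ?thesis using assms typT.TT_Sub by blast
qed

definition P1 :: "env \<Rightarrow> tm \<Rightarrow> bool" where
  "P1 \<Gamma> t = (\<forall>A T. typK \<Gamma> t A \<longrightarrow> algK \<Gamma> A T \<longrightarrow> top_ty T \<longrightarrow> wf_ty \<Gamma> T \<longrightarrow> typT \<Gamma> t T)"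

definition P2 :: "env \<Rightarrow> tm \<Rightarrow> bool" where
  "P2 \<Gamma> t = (\<forall>A. typK \<Gamma> t A \<longrightarrow> (\<exists>M. top_ty M \<and> wf_ty \<Gamma> M \<and> typT \<Gamma> t M \<and> algK \<Gamma> M A))"

lemma P2_P1: "P2 \<Gamma> t \<Longrightarrow> wf_env \<Gamma> \<Longrightarrow> top_env \<Gamma> \<Longrightarrow> P1 \<Gamma> t"
  unfolding P1_def P2_def using from_neutral by blast

lemma main: "wf_env \<Gamma> \<Longrightarrow> top_env \<Gamma> \<Longrightarrow> wf_tm \<Gamma> t \<Longrightarrow> top_tm t \<Longrightarrow> beta_normal t \<Longrightarrow>
  P1 \<Gamma> t \<and> (neutral t \<longrightarrow> P2 \<Gamma> t)"
proof (induction t arbitrary: \<Gamma>)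
  case top
  have "P1 \<Gamma> top" unfolding P1_def
  proof (intro allI impI)
    fix A T assume "typK \<Gamma> top A" "algK \<Gamma> A T"
    then have "algK \<Gamma> TTop T" using typK_top_inv alg_trans by blast
    then have "T = TTop" by (rule alg_top_inv)
    then show "typT \<Gamma> top T" using top.prems by (simp add: typT.TT_Top)
  qed
  then show ?case by simp
next
  case (V i)
  have "P2 \<Gamma> (V i)" unfolding P2_def
  proof (intro allI impI)
    fix A assume "typK \<Gamma> (V i) A"
    then obtain U where u: "i < length \<Gamma>" "\<Gamma>!i = VarB U" "algK \<Gamma> (shift_ty (Suc i) 0 U) A"
      using typK_Var_inv by blast
    have "top_ty (shift_ty (Suc i) 0 U)" using top_env_nth u V.prems by auto
    moreover have "wf_ty \<Gamma> (shift_ty (Suc i) 0 U)" using wf_env_v u V.prems by blast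
    moreover have "typT \<Gamma> (V i) (shift_ty (Suc i) 0 U)" using u V.prems by (simp add: typT.TT_Var)
    ultimately show "\<exists>M. top_ty M \<and> wf_ty \<Gamma> M \<and> typT \<Gamma> (V i) M \<and> algK \<Gamma> M A" using u by blast
  qed
  then show ?case using P2_P1 V.prems by simp
next
  case (Lam S u)
  have wfS: "wf_ty \<Gamma> S" and wfu: "wf_tm (VarB S # \<Gamma>) u" and tS: "top_ty S" and tu: "top_tm u"
    and bu: "beta_normal u" using Lam.prems by auto
  have env: "wf_env (VarB S # \<Gamma>)" "top_env (VarB S # \<Gamma>)" using Lam.prems wfS tS by (auto simp: top_env_def)
  have IH: "P1 (VarB S # \<Gamma>) u" using Lam.IH[OF env wfu tu bu] by simp
  have "P1 \<Gamma> (Lam S u)" unfolding P1_def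
  proof (intro allI impI)
    fix A T assume a: "typK \<Gamma> (Lam S u) A" "algK \<Gamma> A T" "top_ty T" "wf_ty \<Gamma> T"
    obtain B where b: "typK (VarB S#\<Gamma>) u (shift_ty 1 0 B)" "algK \<Gamma> (Arr S B) A"
      using typK_Lam_inv[OF a(1)] by blast
    have "algK \<Gamma> (Arr S B) T" using b a alg_trans by blast
    from alg_Arr_inv[OF this] show "typT \<Gamma> (Lam S u) T"
    proof (elim disjE exE conjE)
      assume T: "T = TTop"
      have "typT (VarB S # \<Gamma>) u TTop"
        using IH b(1) algK.A_Top[of "VarB S # \<Gamma>" "shift_ty 1 0 B"] unfolding P1_def by simp
      then have "typT \<Gamma> (Lam S u) (Arr S TTop)" using typT.TT_Abs[of S \<Gamma> u TTop] by simp
      moreover have "subT \<Gamma> (Arr S TTop) TTop" using Lam.prems wfS by (simp add: subT.ST_Top)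
      ultimately show ?thesis using T typT.TT_Sub by blast
    next
      fix T1 T2 assume t: "T = Arr T1 T2" "algK \<Gamma> T1 S" "algK \<Gamma> B T2"
      have w: "algK (VarB S # \<Gamma>) (shift_ty 1 0 B) (shift_ty 1 0 T2)"
        using alg_weaken[OF t(3), of "[]"] by simp
      have "wf_ty (VarB S # \<Gamma>) (shift_ty 1 0 T2)" using wf_shift0[of \<Gamma> T2 "[VarB S]"] a t by simp
      then have "typT (VarB S # \<Gamma>) u (shift_ty 1 0 T2)" using IH b(1) w a t unfolding P1_def by auto
      then have "typT \<Gamma> (Lam S u) (Arr S T2)" by (rule typT.TT_Abs)
      moreover have "subT \<Gamma> T1 S" using alg_subT[OF t(2)] Lam.prems wfS tS a t by simp
      moreover have "subT \<Gamma> T2 T2" using Lam.prems a t by (simp add: subT.ST_Refl)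
      ultimately show ?thesis using t typT.TT_Sub subT.ST_Arr by blast
    qed
  qed
  then show ?case by simp
next
  case (TLam S u)
  have wfS: "wf_ty \<Gamma> S" and wfu: "wf_tm (TVarB S # \<Gamma>) u" and tS: "top_ty S" and tu: "top_tm u"
    and bu: "beta_normal u" using TLam.prems by auto
  have env: "wf_env (TVarB S # \<Gamma>)" "top_env (TVarB S # \<Gamma>)" using TLam.prems wfS tS by (auto simp: top_env_def)
  have IH: "P1 (TVarB S # \<Gamma>) u" using TLam.IH[OF env wfu tu bu] by simp
  have "P1 \<Gamma> (TLam S u)" unfolding P1_def
  proof (intro allI impI)
    fix A T assume a: "typK \<Gamma> (TLam S u) A" "algK \<Gamma> A T" "top_ty T" "wf_ty \<Gamma> T"
    obtain B where b: "typK (TVarB S#\<Gamma>) u B" "algK \<Gamma> (AllK S B) A"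
      using typK_TLam_inv[OF a(1)] by blast
    have "algK \<Gamma> (AllK S B) T" using b a alg_trans by blast
    from alg_AllK_inv[OF this] show "typT \<Gamma> (TLam S u) T"
    proof (elim disjE exE conjE)
      assume T: "T = TTop"
      have "typT (TVarB S # \<Gamma>) u TTop"
        using IH b(1) algK.A_Top[of "TVarB S # \<Gamma>" B] unfolding P1_def by simp
      then have "typT \<Gamma> (TLam S u) (AllT S TTop)" by (rule typT.TT_TAbs)
      moreover have "subT \<Gamma> (AllT S TTop) TTop" using TLam.prems wfS by (simp add: subT.ST_Top)
      ultimately show ?thesis using T typT.TT_Sub by blast
    next
      fix T1 assume t: "T = AllK S T1" then show ?thesis using a by simp
    next
      fix T0 T1 assume t: "T = AllT T0 T1" "algK \<Gamma> T0 S" "algK (TVarB S # \<Gamma>) B T1"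
      have wT1: "wf_ty (TVarB S # \<Gamma>) T1" using a t by (auto intro: wf_tv_cons)
      then have "typT (TVarB S # \<Gamma>) u T1" using IH b(1) a t unfolding P1_def by auto
      then have "typT \<Gamma> (TLam S u) (AllT S T1)" by (rule typT.TT_TAbs)
      moreover have "subT \<Gamma> T0 S" using alg_subT[OF t(2)] TLam.prems wfS tS a t by simp
      moreover have "subT (TVarB TTop # \<Gamma>) T1 T1" using TLam.prems wT1
        by (auto intro: subT.ST_Refl wf_tv_cons)
      ultimately show ?thesis using t typT.TT_Sub subT.ST_AllTop by blast
    qed
  qed
  then show ?case by simp
next
  case (App n s)
  have pn: "wf_tm \<Gamma> n" "top_tm n" "beta_normal n" and ps: "wf_tm \<Gamma> s" "top_tm s" "beta_normal s"
    and nl: "case n of Lam _ _ \<Rightarrow> False | _ \<Rightarrow> True" using App.prems by auto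
  have IHs: "P1 \<Gamma> s" using App.IH(2)[OF App.prems(1,2) ps] by simp
  have "P2 \<Gamma> (App n s)" unfolding P2_def
  proof (intro allI impI)
    fix A assume "typK \<Gamma> (App n s) A"
    then obtain A1 B1 where h: "typK \<Gamma> n (Arr A1 B1)" "typK \<Gamma> s A1" "algK \<Gamma> B1 A"
      using typK_App_inv by blast
    have "neutral n"
    proof (cases n)
      case top
      then show ?thesis using typK_top_inv[OF h(1)] alg_top_inv by fastforce
    next
      case (TLam S u)
      then obtain B where "algK \<Gamma> (AllK S B) (Arr A1 B1)" using typK_TLam_inv[OF h(1)] by blast
      then show ?thesis using alg_AllK_inv by fastforce
    qed (use nl in auto)
    then have "P2 \<Gamma> n" using App.IH(1)[OF App.prems(1,2) pn] by simp
    then obtain M where m: "top_ty M" "wf_ty \<Gamma> M" "typT \<Gamma> n M" "algK \<Gamma> M (Arr A1 B1)"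
      using h(1) unfolding P2_def by blast
    obtain A' B' where e: "subT \<Gamma> M (Arr A' B')" "top_ty A'" "top_ty B'" "wf_ty \<Gamma> A'" "wf_ty \<Gamma> B'"
      "algK \<Gamma> A1 A'" "algK \<Gamma> B' B1"
      using expose_Arr[OF m(4) refl App.prems(1,2) m(2) m(1)] by blast
    have "typT \<Gamma> n (Arr A' B')" using m e typT.TT_Sub by blast
    moreover have "typT \<Gamma> s A'" using IHs h e unfolding P1_def by blast
    ultimately have "typT \<Gamma> (App n s) B'" by (rule typT.TT_App)
    moreover have "algK \<Gamma> B' A" using e h alg_trans by blast
    ultimately show "\<exists>M. top_ty M \<and> wf_ty \<Gamma> M \<and> typT \<Gamma> (App n s) M \<and> algK \<Gamma> M A" using e by blast
  qed
  then show ?case using P2_P1 App.prems by simp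
next
  case (TApp n S')
  have pn: "wf_tm \<Gamma> n" "top_tm n" "beta_normal n" and pS: "wf_ty \<Gamma> S'" "top_ty S'"
    and nl: "case n of TLam _ _ \<Rightarrow> False | _ \<Rightarrow> True" using TApp.prems by auto
  have "P2 \<Gamma> (TApp n S')" unfolding P2_def
  proof (intro allI impI)
    fix A assume "typK \<Gamma> (TApp n S') A"
    then obtain S0 T0 where h: "typK \<Gamma> n (AllT S0 T0)" "subK \<Gamma> S' S0" "algK \<Gamma> (subst_ty 0 S' T0) A"
      using typK_TApp_inv by blast
    have "neutral n"
    proof (cases n)
      case top
      then show ?thesis using typK_top_inv[OF h(1)] alg_top_inv by fastforce
    next
      case (Lam S u)
      then obtain B where "algK \<Gamma> (Arr S B) (AllT S0 T0)" using typK_Lam_inv[OF h(1)] by blast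
      then show ?thesis using alg_Arr_inv by fastforce
    qed (use nl in auto)
    then have "P2 \<Gamma> n" using TApp.IH[OF TApp.prems(1,2) pn] by simp
    then obtain M where m: "top_ty M" "wf_ty \<Gamma> M" "typT \<Gamma> n M" "algK \<Gamma> M (AllT S0 T0)"
      using h(1) unfolding P2_def by blast
    obtain U0 U1 where e: "subT \<Gamma> M (AllT U0 U1)" "top_ty U0" "top_ty U1" "wf_ty \<Gamma> U0"
      "wf_ty (TVarB U0#\<Gamma>) U1" "algK \<Gamma> S0 U0" "algK (TVarB TTop#\<Gamma>) U1 T0"
      using expose_All[OF m(4) refl TApp.prems(1,2) m(2) m(1)] by blast
    have "typT \<Gamma> n (AllT U0 U1)" using m e typT.TT_Sub by blast
    moreover have "subT \<Gamma> S' U0"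
    proof -
      have "algK \<Gamma> S' U0" using sub_alg[OF h(2)] e alg_trans by blast
      then show ?thesis using alg_subT TApp.prems(1,2) pS e by blast
    qed
    ultimately have "typT \<Gamma> (TApp n S') (subst_ty 0 S' U1)" by (rule typT.TT_TApp)
    moreover have "top_ty (subst_ty 0 S' U1)" using top_subst pS e by blast
    moreover have "wf_ty \<Gamma> (subst_ty 0 S' U1)"
      using wf_subst[of "[]" U0 \<Gamma> U1 S' "[]"] e pS by simp
    moreover have "algK \<Gamma> (subst_ty 0 S' U1) A"
    proof -
      have "algK \<Gamma> (subst_ty 0 S' U1) (subst_ty 0 S' T0)" using alg_subst[OF e(7), of "[]" \<Gamma> S'] by simp
      then show ?thesis using h(3) alg_trans by blast
    qed
    ultimately show "\<exists>M. top_ty M \<and> wf_ty \<Gamma> M \<and> typT \<Gamma> (TApp n S') M \<and> algK \<Gamma> M A" by blast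
  qed
  then show ?case using P2_P1 TApp.prems by simp
qed

theorem proposition7p3:
  assumes "wf_env \<Theta>" and "top_env \<Theta>"
    and "wf_tm \<Theta> t" and "top_tm t" and "beta_normal t"
    and "wf_ty \<Theta> T" and "top_ty T"
    and "typK \<Theta> t T"
  shows "typT \<Theta> t T"
  using main[OF assms(1-5)] assms(6-8) alg_refl unfolding P1_def by blast


end
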